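(* Let $\mathfrak{X}=(X,\{R_0,R_1,R_2,R_3,R_4\})$ be a skew-symmetric $4$-class association scheme with $R_1^\top=R_2$ and $R_3^\top=R_4$, and suppose that the character table of $\mathfrak X$ is of type $1$ or of type $2$ (in the sense described in the context). Then for each $i\in\{1,2\}$ the digraph $(X,R_i\cup R_{i+2})$ has $5$ distinct eigenvalues.
   Context: An association scheme on a finite set $X$ is a partition of $X\times X$ into relations $R_0$ (diagonal), $R_1,\dots,R_d$ closed under transposition, with constant intersection numbers; skew-symmetric means $R_0$ is the only symmetric relation. Schemes with $\le4$ classes are commutative; the Bose–Mesner algebra (span of the $01$ adjacency matrices $A_i$) has primitive idempotents $E_j$ with $A_iE_j=p_i(j)E_j$, and the character table $P$ has $(j,i)$-entry $p_i(j)$. The symmetrization $\tilde{\mathfrak X}=(X,\{R_0,R_1\cup R_2,R_3\cup R_4\})$ is a $2$-class scheme; write its character table (rows $\tilde E_0,\tilde E_1,\tilde E_2$, columns $R_0,R_1\cup R_2,R_3\cup R_4$) as $(1,k_1,k_2)$, $(1,r_1,t_1)$, $(1,r_2,t_2)$, with multiplicities $1,m_1,m_2$ ($m_j=\operatorname{rank}\tilde E_j$), and $n=|X|=1+k_1+k_2$. It is known that the primitive idempotents $E_0,\dots,E_4$ of $\mathfrak X$ can be ordered so that the character table of $\mathfrak X$ (columns $A_0,\dots,A_4$) has rows $(1,k_1/2,k_1/2,k_2/2,k_2/2)$, $(1,\rho,\bar\rho,\tau,\bar\tau)$, $(1,\sigma,\bar\sigma,\omega,\bar\omega)$, $(1,\bar\sigma,\sigma,\bar\omega,\omega)$,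 $(1,\bar\rho,\rho,\bar\tau,\tau)$ with multiplicities $1,m_1/2,m_1/2,m_2/2,m_2/2$, and one of the following holds. Type 1: $\rho=r_1/2$, $\sigma=(r_2+\sqrt{-b})/2$, $\tau=(t_1+\sqrt{-z})/2$, $\omega=t_2/2$ with $b=nk_1/m_2$, $z=nk_2/m_1$. Type 2: $\rho=(r_1+\sqrt{-y})/2$, $\sigma=r_2/2$, $\tau=t_1/2$, $\omega=(t_2+\sqrt{-c})/2$ with $y=nk_1/m_1$, $c=nk_2/m_2$. Type 3: $\rho=(r_1+\sqrt{-y})/2$, $\tau=(t_1+\sqrt{-z})/2$, $\sigma=(r_2+\sqrt{-b})/2$, $\omega=(t_2-\sqrt{-c})/2$ with $b,c,y,z>0$. Eigenvalues of a digraph $(X,R)$ are those of its $01$ adjacency matrix. *)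

theory Defs
  imports "HOL-Analysis.Analysis"
begin

text \<open>The ground set X is the (finite, nonempty) universe of the type 'a.
  Relations are indexed by naturals; only indices 0..d matter.\<close>

definition adjm :: "('a::finite \<times> 'a) set \<Rightarrow> complex^'a^'a" where
  "adjm S = (\<chi> x y. if (x, y) \<in> S then 1 else 0)"

definition assoc_scheme :: "nat \<Rightarrow> (nat \<Rightarrow> ('a::finite \<times> 'a) set) \<Rightarrow> bool" where
  "assoc_scheme d R \<longleftrightarrow>
     R 0 = Id \<and>
     (\<forall>i\<le>d. R i \<noteq> {}) \<and>
     (\<forall>i\<le>d. \<forall>j\<le>d. i \<noteq> j \<longrightarrow> R i \<inter> R j = {}) \<and>
     (\<Union>i\<in>{..d}. R i) = UNIV \<and>
     (\<forall>i\<le>d. \<exists>j\<le>d. (R i)\<inverse> = R j) \<and>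
     (\<forall>i\<le>d. \<forall>j\<le>d. \<forall>h\<le>d. \<exists>p::nat. \<forall>x y. (x, y) \<in> R h \<longrightarrow>
         card {z. (x, z) \<in> R i \<and> (z, y) \<in> R j} = p)"

definition skew_symmetric :: "nat \<Rightarrow> (nat \<Rightarrow> ('a \<times> 'a) set) \<Rightarrow> bool" where
  "skew_symmetric d R \<longleftrightarrow> (\<forall>i\<in>{1..d}. (R i)\<inverse> \<noteq> R i)"

definition digraph_eigenvalues :: "('a::finite \<times> 'a) set \<Rightarrow> complex set" where
  "digraph_eigenvalues S = {c. \<exists>v. v \<noteq> 0 \<and> adjm S *v v = c *s v}"

text \<open>E 0,...,E 4 are the primitive idempotents of the Bose-Mesner algebra of a 4-class
  scheme R, with character table P (P j i = p_i(j)), i.e. they are nonzero pairwise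
  orthogonal idempotents summing to the identity with A_i E_j = p_i(j) E_j.\<close>
definition prim_idempotents_table ::
  "(nat \<Rightarrow> ('a::finite \<times> 'a) set) \<Rightarrow> (nat \<Rightarrow> complex^'a^'a) \<Rightarrow> (nat \<Rightarrow> nat \<Rightarrow> complex) \<Rightarrow> bool" where
  "prim_idempotents_table R E P \<longleftrightarrow>
     (\<forall>j\<le>4. E j \<noteq> 0) \<and>
     (\<forall>j\<le>4. \<forall>l\<le>4. E j ** E l = (if j = l then E j else 0)) \<and>
     (\<Sum>j\<le>4. E j) = mat 1 \<and>
     (\<forall>i\<le>4. \<forall>j\<le>4. adjm (R i) ** E j = mat (P j i) ** E j)"

text \<open>The character table of the 4-class scheme R has the shape described in the context
  (with the given ordering of the idempotents) and is of type 1 or of type 2.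
  Here k1,k2 are the valencies of R1 u R2 and R3 u R4, n = |X|,
  Et1 = E1 + E4 and Et2 = E2 + E3 are the primitive idempotents of the symmetrization,
  r1,t1 (resp. r2,t2) are the eigenvalues of A(R1 u R2), A(R3 u R4) on Et1 (resp. Et2),
  and m1 = rank Et1, m2 = rank Et2.\<close>
definition table_type_1_or_2 :: "(nat \<Rightarrow> ('a::finite \<times> 'a) set) \<Rightarrow> bool" where
  "table_type_1_or_2 R \<longleftrightarrow>
    (\<exists>E \<rho> \<sigma> \<tau> \<omega> (k1::real) (k2::real) (r1::real) (t1::real) (r2::real) (t2::real).
      let n = real CARD('a);
          Et1 = E 1 + E 4; Et2 = E 2 + E 3;
          m1 = real (rank Et1); m2 = real (rank Et2);
          P = (\<lambda>j i. [[1, of_real (k1/2), of_real (k1/2), of_real (k2/2), of_real (k2/2)],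
                      [1, \<rho>, cnj \<rho>, \<tau>, cnj \<tau>],
                      [1, \<sigma>, cnj \<sigma>, \<omega>, cnj \<omega>],
                      [1, cnj \<sigma>, \<sigma>, cnj \<omega>, \<omega>],
                      [1, cnj \<rho>, \<rho>, cnj \<tau>, \<tau>]] ! j ! i)
      in (\<forall>x. real (card {y. (x, y) \<in> R 1 \<union> R 2}) = k1) \<and>
         (\<forall>x. real (card {y. (x, y) \<in> R 3 \<union> R 4}) = k2) \<and>
         adjm (R 1 \<union> R 2) ** Et1 = mat (of_real r1) ** Et1 \<and>
         adjm (R 3 \<union> R 4) ** Et1 = mat (of_real t1) ** Et1 \<and>
         adjm (R 1 \<union> R 2) ** Et2 = mat (of_real r2) ** Et2 \<and>
         adjm (R 3 \<union> R 4) ** Et2 = mat (of_real t2) ** Et2 \<and>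
         prim_idempotents_table R E P \<and>
         ((\<rho> = of_real (r1 / 2) \<and>
           \<sigma> = (of_real r2 + \<i> * of_real (sqrt (n * k1 / m2))) / 2 \<and>
           \<tau> = (of_real t1 + \<i> * of_real (sqrt (n * k2 / m1))) / 2 \<and>
           \<omega> = of_real (t2 / 2))
          \<or>
          (\<rho> = (of_real r1 + \<i> * of_real (sqrt (n * k1 / m1))) / 2 \<and>
           \<sigma> = of_real (r2 / 2) \<and>
           \<tau> = of_real (t1 / 2) \<and>
           \<omega> = (of_real t2 + \<i> * of_real (sqrt (n * k2 / m2))) / 2)))"

end

theory Submission
  imports Defs
begin

lemma mm_entry: "(A ** B)$i$j = (\<Sum>k\<in>UNIV. A$i$k * B$k$j)"
  by (simp add: matrix_matrix_mult_def)

lemma mat_mult_entry[simp]: "(mat c ** M) $ i $ j = c * M $ i $ j"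
proof -
  have "(mat c ** M) $ i $ j = (\<Sum>k\<in>UNIV. (if i = k then c else 0) * M$k$j)"
    by (simp add: matrix_matrix_mult_def mat_def)
  also have "\<dots> = (\<Sum>k\<in>UNIV. if k = i then c * M$k$j else 0)" by (rule sum.cong) auto
  finally show ?thesis by simp
qed

lemma mat_mult_mat: "mat a ** (mat b ** M) = mat (a*b) ** (M::complex^'n^'m)"
  by (simp add: vec_eq_iff)

lemma mult_mat_comm: "A ** (mat c ** B) = mat c ** (A ** (B::complex^'n^'n))"
proof -
  have "(A ** (mat c ** B))$i$j = (mat c ** (A ** B))$i$j" for i j
    by (simp add: mm_entry[of A] sum_distrib_left algebra_simps)
  then show ?thesis by (simp add: vec_eq_iff)
qed

lemma dim_pos: "(A::complex^'n^'m) \<noteq> 0 \<Longrightarrow> rank A > 0"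
proof -
  assume "A \<noteq> 0"
  then obtain i where "row i A \<noteq> 0" by (auto simp: vec_eq_iff row_def)
  moreover have "row i A \<in> rows A" by (auto simp: rows_def)
  ultimately have "\<not> rows A \<subseteq> {0}" by auto
  then show ?thesis unfolding row_rank_def_gen using vec.dim_eq_0 by auto
qed


lemma matrix_add_rdistrib': "((A::complex^'n^'m) + B) ** (C::complex^'p^'n) = A ** C + B ** C"
  by (simp add: vec_eq_iff mm_entry sum.distrib[symmetric] algebra_simps)

lemma mv_add_rdistrib': "((A::complex^'n^'m) + B) *v v = A *v v + B *v v"
  by (simp add: vec_eq_iff matrix_vector_mult_def sum.distrib[symmetric] algebra_simps)

lemma sum_mult_right: "(\<Sum>j\<in>S. f j) ** (B::complex^'n^'n) = (\<Sum>j\<in>S. f j ** B)"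
  by (induction S rule: infinite_finite_induct) (auto simp: matrix_add_rdistrib')

lemma sum_mult_left: "(B::complex^'n^'n) ** (\<Sum>j\<in>S. f j) = (\<Sum>j\<in>S. B ** f j)"
  by (induction S rule: infinite_finite_induct) (auto simp: matrix_add_ldistrib)

lemma sum_mvec: "(\<Sum>j\<in>S. f j) *v (v::complex^'n) = (\<Sum>j\<in>S. f j *v v)"
  by (induction S rule: infinite_finite_induct) (auto simp: mv_add_rdistrib')

lemma mat0_eq: "mat c ** F = 0 \<Longrightarrow> F \<noteq> (0::complex^'n^'n) \<Longrightarrow> c = 0"
  by (auto simp: vec_eq_iff)

lemma mat_add: "mat a ** M + mat b ** M = mat (a+b) ** (M::complex^'n^'n)"
  by (simp add: vec_eq_iff algebra_simps)
lemma mat_diff: "mat a ** M - mat b ** M = mat (a-b) ** (M::complex^'n^'n)"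
  by (simp add: vec_eq_iff algebra_simps)

lemma mat_mv: "(mat a ** M) *v (v::complex^'n) = a *s (M *v v)"
  by (simp add: vec_eq_iff matrix_vector_mult_def sum_distrib_left mult.assoc)

lemma mv_scale: "M *v (a *s (v::complex^'n)) = a *s (M *v v)"
  by (simp add: vec_eq_iff matrix_vector_mult_def sum_distrib_left algebra_simps)

locale idem5 =
  fixes F :: "nat \<Rightarrow> complex^'n^'n"
  assumes nz: "\<And>j. j\<le>4 \<Longrightarrow> F j \<noteq> 0"
    and orth: "\<And>j l. j\<le>4 \<Longrightarrow> l\<le>4 \<Longrightarrow> F j ** F l = (if j = l then F j else 0)"
    and tot: "(\<Sum>j\<le>4. F j) = mat 1"
begin

definition G :: "(nat \<Rightarrow> complex) \<Rightarrow> complex^'n^'n" where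
  "G c = (\<Sum>j\<le>4. mat (c j) ** F j)"

lemma G_F: "l \<le> 4 \<Longrightarrow> G c ** F l = mat (c l) ** F l"
proof -
  assume l: "l \<le> 4"
  have "G c ** F l = (\<Sum>j\<le>4. mat (c j) ** (F j ** F l))"
    by (simp add: G_def sum_mult_right matrix_mul_assoc)
  also have "\<dots> = (\<Sum>j\<le>4. if j = l then mat (c l) ** F l else 0)"
    by (rule sum.cong) (auto simp: orth l)
  also have "\<dots> = mat (c l) ** F l" using l by simp
  finally show ?thesis .
qed

lemma F_G: "l \<le> 4 \<Longrightarrow> F l ** G c = mat (c l) ** F l"
proof -
  assume l: "l \<le> 4"
  have "F l ** G c = (\<Sum>j\<le>4. mat (c j) ** (F l ** F j))"
    by (simp add: G_def sum_mult_left mult_mat_comm)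
  also have "\<dots> = (\<Sum>j\<le>4. if j = l then mat (c l) ** F l else 0)"
    by (rule sum.cong) (auto simp: orth l)
  also have "\<dots> = mat (c l) ** F l" using l by simp
  finally show ?thesis .
qed

lemma G_mult: "G c ** G d = G (\<lambda>j. c j * d j)"
proof -
  have "G c ** G d = (\<Sum>j\<le>4. mat (d j) ** (G c ** F j))"
    by (simp add: G_def[of d] sum_mult_left mult_mat_comm)
  also have "\<dots> = (\<Sum>j\<le>4. mat (c j * d j) ** F j)"
    by (rule sum.cong) (auto simp: G_F mat_mult_mat mult.commute)
  finally show ?thesis by (simp add: G_def)
qed

lemma G_add: "G c + G d = G (\<lambda>j. c j + d j)"
  by (simp add: G_def sum.distrib[symmetric] mat_add)

lemma G_diff: "G c - G d = G (\<lambda>j. c j - d j)"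
  by (simp add: G_def sum_subtractf[symmetric] mat_diff)

lemma G_scale: "mat a ** G c = G (\<lambda>j. a * c j)"
  by (simp add: G_def mat_mult_mat sum_mult_left)

lemma G_one: "G (\<lambda>_. 1) = mat 1"
  by (simp add: G_def tot)

lemma G_cong: "(\<And>j. j \<le> 4 \<Longrightarrow> c j = d j) \<Longrightarrow> G c = G d"
  unfolding G_def by (rule sum.cong) auto

lemma G_coef: "G c = G d \<Longrightarrow> l \<le> 4 \<Longrightarrow> c l = d l"
proof -
  assume e: "G c = G d" and l: "l \<le> 4"
  have "mat (c l) ** F l - mat (d l) ** F l = 0" using G_F[OF l, of c] G_F[OF l, of d] e by simp
  then have "mat (c l - d l) ** F l = 0" by (simp add: mat_diff)
  then show ?thesis using mat0_eq nz[OF l] by fastforce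
qed

lemma G_entry: "G c $ x $ y = (\<Sum>j\<le>4. c j * F j $ x $ y)"
  by (simp add: G_def sum_component)

lemma repr: "(\<And>j. j\<le>4 \<Longrightarrow> A ** F j = mat (c j) ** F j) \<Longrightarrow> A = G c"
proof -
  assume h: "\<And>j. j\<le>4 \<Longrightarrow> A ** F j = mat (c j) ** F j"
  have "A = A ** (\<Sum>j\<le>4. F j)" by (simp add: tot)
  also have "\<dots> = (\<Sum>j\<le>4. A ** F j)" by (simp add: sum_mult_left)
  also have "\<dots> = G c" unfolding G_def by (rule sum.cong) (auto simp: h)
  finally show ?thesis .
qed

lemma eig: "{\<mu>. \<exists>v. v \<noteq> 0 \<and> G c *v v = \<mu> *s v} = c ` {..4}"
proof
  show "c ` {..4} \<subseteq> {\<mu>. \<exists>v. v \<noteq> 0 \<and> G c *v v = \<mu> *s v}"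
  proof
    fix m assume "m \<in> c ` {..4}"
    then obtain j where j: "j \<le> 4" "m = c j" by auto
    obtain x y where xy: "F j $ x $ y \<noteq> 0" using nz[OF j(1)] by (auto simp: vec_eq_iff)
    define v where "v = (\<chi> i. F j $ i $ y)"
    have "v \<noteq> 0" using xy by (auto simp: v_def vec_eq_iff)
    moreover have "G c *v v = m *s v"
    proof -
      have "(G c *v v) $ i = (G c ** F j) $ i $ y" for i
        by (simp add: v_def matrix_vector_mult_def mm_entry)
      then show ?thesis using G_F[OF j(1), of c] j(2) by (simp add: vec_eq_iff v_def)
    qed
    ultimately show "m \<in> {\<mu>. \<exists>v. v \<noteq> 0 \<and> G c *v v = \<mu> *s v}" by auto
  qed
next
  show "{\<mu>. \<exists>v. v \<noteq> 0 \<and> G c *v v = \<mu> *s v} \<subseteq> c ` {..4}"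
  proof
    fix m assume "m \<in> {\<mu>. \<exists>v. v \<noteq> 0 \<and> G c *v v = \<mu> *s v}"
    then obtain v where v: "v \<noteq> 0" "G c *v v = m *s v" by auto
    have "v = (\<Sum>j\<le>4. F j) *v v" by (simp add: tot)
    also have "\<dots> = (\<Sum>j\<le>4. F j *v v)" by (rule sum_mvec)
    finally have "\<exists>j\<le>4. F j *v v \<noteq> 0" using v(1) by (metis (no_types, lifting) atMost_iff sum.neutral)
    then obtain j where j: "j \<le> 4" "F j *v v \<noteq> 0" by auto
    have "(F j ** G c) *v v = c j *s (F j *v v)"
      using F_G[OF j(1), of c] by (simp add: mat_mv)
    moreover have "(F j ** G c) *v v = m *s (F j *v v)"
      by (simp add: matrix_vector_mul_assoc[symmetric] v(2) mv_scale)
    ultimately have "c j *s (F j *v v) = m *s (F j *v v)" by metis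
    then have "(c j - m) *s (F j *v v) = 0" by (simp add: vector_sub_rdistrib)
    then have "c j = m" using j(2) vector_mul_eq_0 by auto
    then show "m \<in> c ` {..4}" using j(1) by auto
  qed
qed

end


lemma alg:
  fixes k1 k2 N f0 u v s2 r w :: complex
  assumes k1: "k1 \<noteq> 0" and k2: "k2 \<noteq> 0" and kk: "k1 + k2 \<noteq> 0" and N: "N = 1 + k1 + k2"
    and a: "k1 * f0 + 2*r*u + (-1-2*w) * v = 0"
    and c: "k1^2 * f0 + 4*r^2*u + (-1-2*w)^2 * v = k1"
    and d: "k2^2 * f0 + (-1-2*r)^2*u + 4*w^2 * v = k2"
    and e: "s2 * v = k1" and f: "s2 * u = k2" and g: "f0 + u + v = 1" and h: "N * f0 = 1"
  shows "s2 = (2*r+2*w+1)^2"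
proof -
  have "N * s2 * (f0 + u + v) = s2 * (N*f0) + N * (s2*u) + N*(s2* v)" by (simp add: algebra_simps)
  then have "N * s2 = s2 + N * k2 + N * k1" using e f g h by simp
  then have "(k1 + k2) * (N - s2) = 0" using N by (simp add: algebra_simps)
  moreover note kk
  ultimately have sN: "s2 = N" by simp
  have fN: "N * f0 = 1" "N * u = k2" "N * v = k1" using h e f sN by auto
  have "k1 * (N*f0) + 2*r*(N*u) + (-1-2*w) * (N* v) = N * (k1 * f0 + 2*r*u + (-1-2*w) * v)"
    by (simp add: algebra_simps)
  then have "k1 + 2*r*k2 + (-1-2*w) * k1 = 0" using a fN by simp
  then have rw: "r * k2 = w * k1" by (simp add: algebra_simps)
  have "k1^2 * (N*f0) + 4*r^2*(N*u) + (-1-2*w)^2 * (N* v) = N * (k1^2 * f0 + 4*r^2*u + (-1-2*w)^2 * v)"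
    by (simp add: algebra_simps)
  then have "k1^2 + 4*r^2*k2 + (-1-2*w)^2 * k1 = N*k1" using c fN by simp
  moreover have "4*r^2*k2 = 4*r*w*k1" using rw by (simp add: power2_eq_square algebra_simps)
  ultimately have "k1^2 + 4*r*w*k1 + (-1-2*w)^2 * k1 = N*k1" by simp
  then have "k1 * (k1 + 4*r*w + (1+2*w)^2) = k1 * N" by (simp add: algebra_simps power2_eq_square)
  then have c2: "k1 + 4*r*w + (1+2*w)^2 = N" using k1 by simp
  have "k2^2 * (N*f0) + (-1-2*r)^2*(N*u) + 4*w^2*(N* v) = N * (k2^2 * f0 + (-1-2*r)^2*u + 4*w^2 * v)"
    by (simp add: algebra_simps)
  then have "k2^2 + (-1-2*r)^2*k2 + 4*w^2*k1 = N*k2" using d fN by simp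
  moreover have "4*w^2*k1 = 4*r*w*k2" using rw by (simp add: power2_eq_square algebra_simps)
  ultimately have "k2^2 + (-1-2*r)^2*k2 + 4*r*w*k2 = N*k2" by simp
  then have "k2 * (k2 + 4*r*w + (1+2*r)^2) = k2 * N" by (simp add: algebra_simps power2_eq_square)
  then have d2: "k2 + 4*r*w + (1+2*r)^2 = N" using k2 by simp
  have "(k1 + 4*r*w + (1+2*w)^2) + (k2 + 4*r*w + (1+2*r)^2) = N + N" using c2 d2 by simp
  then show ?thesis using N sN by algebra
qed


lemma nt: fixes a w q :: int assumes "(2*a+2*w+1)^2 + (1+2*w)^2 = 4*q" shows False
proof -
  have "(2*a+2*w+1)^2 + (1+2*w)^2 = 2*(2*((a+w)^2 + (a+w) + w^2 + w) + 1)"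
    by (simp add: power2_eq_square algebra_simps)
  then have "2*((a+w)^2 + (a+w) + w^2 + w) + 1 = 2*q" using assms by simp
  then show False by presburger
qed

lemma adjm_entry[simp]: "adjm S $ x $ y = (if (x, y) \<in> S then 1 else 0)"
  by (simp add: adjm_def)

lemma adjm_union: "R \<inter> S = {} \<Longrightarrow> adjm (R \<union> S) = adjm R + adjm S"
  by (auto simp: vec_eq_iff)

definition intm :: "complex^'n^'m \<Rightarrow> bool" where
  "intm M \<longleftrightarrow> (\<forall>i j. M $ i $ j \<in> \<int>)"

lemma intm_adjm: "intm (adjm S)" by (simp add: intm_def)
lemma intm_add: "intm A \<Longrightarrow> intm B \<Longrightarrow> intm (A + B)" by (simp add: intm_def)
lemma intm_diff: "intm A \<Longrightarrow> intm B \<Longrightarrow> intm (A - B)" by (simp add: intm_def)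
lemma intm_mult: "intm A \<Longrightarrow> intm (B::complex^'n^'n) \<Longrightarrow> intm (A ** B)"
  unfolding intm_def mm_entry by (auto intro!: Ints_sum Ints_mult)

lemma card_sum: "(\<Sum>z\<in>UNIV. if P z then 1 else (0::complex)) = of_nat (card {z::'a::finite. P z})"
proof -
  have "(\<Sum>z\<in>UNIV. if P z then 1 else (0::complex)) = (\<Sum>z\<in>UNIV. of_bool (P z))"
    by (rule sum.cong) auto
  then show ?thesis by simp
qed

lemma sq_plus_diag:
  fixes R :: "('a::finite \<times> 'a) set"
  assumes "R\<inverse> = S" "R \<inter> S = {}"
  shows "((adjm R + adjm S) ** (adjm R + adjm S)) $ x $ x = of_nat (card {z. (x, z) \<in> R \<union> S})"
proof -
  have "((adjm R + adjm S) ** (adjm R + adjm S)) $ x $ x = (\<Sum>z\<in>UNIV. if (x,z) \<in> R \<union> S then 1 else 0)"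
    unfolding mm_entry
    by (rule sum.cong) (use assms in auto)
  then show ?thesis by (simp add: card_sum)
qed

lemma sq_minus_diag:
  fixes R :: "('a::finite \<times> 'a) set"
  assumes "R\<inverse> = S" "R \<inter> S = {}"
  shows "((adjm R - adjm S) ** (adjm R - adjm S)) $ x $ x = - of_nat (card {z. (x, z) \<in> R \<union> S})"
proof -
  have "((adjm R - adjm S) ** (adjm R - adjm S)) $ x $ x = - (\<Sum>z\<in>UNIV. if (x,z) \<in> R \<union> S then 1 else 0)"
    unfolding mm_entry sum_negf[symmetric]
    by (rule sum.cong) (use assms in auto)
  then show ?thesis by (simp add: card_sum)
qed


lemma le4: "j \<le> (4::nat) \<Longrightarrow> j = 0 \<or> j = 1 \<or> j = 2 \<or> j = 3 \<or> j = 4" by auto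

lemma sum5: "(\<Sum>j\<le>(4::nat). f j) = f 0 + f 1 + f 2 + f 3 + (f 4 :: complex)"
  by (simp add: numeral_eq_Suc atMost_Suc algebra_simps)

lemma skew_J:
  fixes S J :: "complex^'n^'n"
  assumes sk: "\<And>z y. S$z$y = -(S$y$z)" and c: "J ** S = S ** J" and one: "\<And>x y. J$x$y = 1"
  shows "J ** S = 0"
proof -
  have col: "(J ** S)$x$y = (\<Sum>z\<in>UNIV. S$z$y)" for x y by (simp add: mm_entry one)
  have row: "(S ** J)$x$y = (\<Sum>z\<in>UNIV. S$x$z)" for x y by (simp add: mm_entry one)
  have neg: "(\<Sum>z\<in>UNIV. S$z$y) = - (\<Sum>z\<in>UNIV. S$y$z)" for y
    unfolding sum_negf[symmetric] by (rule sum.cong) (auto intro: sk)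
  have "(\<Sum>z\<in>UNIV. S$z$y) = 0" for y
  proof -
    have "(\<Sum>z\<in>UNIV. S$z$y) = (\<Sum>z\<in>UNIV. S$y$z)" using col[of y y] row[of y y] c by simp
    then show ?thesis using neg[of y] by simp
  qed
  then show ?thesis by (simp add: vec_eq_iff col)
qed


lemma core:
  fixes R :: "nat \<Rightarrow> ('a::finite \<times> 'a) set" and F :: "nat \<Rightarrow> complex^'a^'a"
    and k1 k2 s :: real and \<rho> \<tau> \<sigma> \<omega> :: complex
  assumes sch: "assoc_scheme 4 R" and t12: "(R 1)\<inverse> = R 2" and t34: "(R 3)\<inverse> = R 4"
    and idem: "idem5 F"
    and tab: "\<And>i j. i \<le> 4 \<Longrightarrow> j \<le> 4 \<Longrightarrow> adjm (R i) ** F j = mat (T ! j ! i) ** F j"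
    and Tdef: "T = [[1, of_real (k1/2), of_real (k1/2), of_real (k2/2), of_real (k2/2)],
                    [1, \<rho>, \<rho>, \<tau>, cnj \<tau>], [1, \<sigma>, cnj \<sigma>, \<omega>, \<omega>],
                    [1, cnj \<sigma>, \<sigma>, \<omega>, \<omega>], [1, \<rho>, \<rho>, cnj \<tau>, \<tau>]]"
    and kv1: "\<And>x. real (card {y. (x,y) \<in> R 1 \<union> R 2}) = k1"
    and kv2: "\<And>x. real (card {y. (x,y) \<in> R 3 \<union> R 4}) = k2"
    and ts: "\<tau> - cnj \<tau> = \<i> * of_real s" and ss: "\<sigma> - cnj \<sigma> = \<i> * of_real s" and s0: "s \<noteq> 0"
  shows False
proof -
  interpret idem5 F by (rule idem)
  from sch have R0: "R 0 = Id" and nonempty: "\<And>i. i \<le> 4 \<Longrightarrow> R i \<noteq> {}"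
    and disj: "\<And>i j. i\<le>4 \<Longrightarrow> j\<le>4 \<Longrightarrow> i\<noteq>j \<Longrightarrow> R i \<inter> R j = {}"
    and cov: "(\<Union>i\<in>{..4}. R i) = UNIV" unfolding assoc_scheme_def by auto
  define c where "c i = (\<lambda>j. T ! j ! i)" for i
  have A: "adjm (R i) = G (c i)" if "i \<le> 4" for i
    by (rule repr) (use tab that in \<open>simp add: c_def\<close>)
  have A0: "adjm (R 0) = G (c 0)" and A1: "adjm (R 1) = G (c 1)" and A2: "adjm (R 2) = G (c 2)"
    and A3: "adjm (R 3) = G (c 3)" and A4: "adjm (R 4) = G (c 4)" using A by auto
  define S1 where "S1 = adjm (R 1) - adjm (R 2)"
  define S3 where "S3 = adjm (R 3) - adjm (R 4)"
  define J where "J = adjm (R 0) + adjm (R 1) + adjm (R 2) + adjm (R 3) + adjm (R 4)"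
  define s1 where "s1 j = c 1 j - c 2 j" for j
  define s3 where "s3 j = c 3 j - c 4 j" for j
  define cJ where "cJ j = c 0 j + c 1 j + c 2 j + c 3 j + c 4 j" for j
  have S1G: "S1 = G s1" unfolding S1_def s1_def by (simp add: A G_diff)
  have S3G: "S3 = G s3" unfolding S3_def s3_def by (simp add: A G_diff)
  have JG: "J = G cJ" unfolding J_def cJ_def by (simp add: A G_add)

  have G0: "G (\<lambda>_. 0) = 0" by (simp add: G_def)
  have Jent: "J$x$y = 1" for x y
  proof -
    obtain i where i: "i \<le> 4" "(x,y) \<in> R i" using cov by blast
    have nin: "(x,y) \<notin> R l" if "l \<le> 4" "l \<noteq> i" for l using disj[OF i(1) that(1)] that(2) i(2) by blast
    show ?thesis using i nin[of 0] nin[of 1] nin[of 2] nin[of 3] nin[of 4] unfolding J_def by (auto dest!: le4)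
  qed
  have skew3: "S3$z$y = -(S3$y$z)" for z y using t34[symmetric] unfolding S3_def by auto
  have skew1: "S1$z$y = -(S1$y$z)" for z y using t12[symmetric] unfolding S1_def by auto
  have comm3: "J ** S3 = S3 ** J" by (simp add: JG S3G G_mult mult.commute)
  have comm1: "J ** S1 = S1 ** J" by (simp add: JG S1G G_mult mult.commute)
  have "G (\<lambda>j. cJ j * s3 j) = G (\<lambda>_. 0)" using skew_J[OF skew3 comm3 Jent] by (simp add: JG S3G G_mult G0)
  from G_coef[OF this, of 1] have "cJ 1 * s3 1 = 0" by simp
  moreover have "s3 1 \<noteq> 0" using ts s0 by (simp add: s3_def c_def Tdef)
  ultimately have "cJ 1 = 0" by simp
  then have "1 + \<rho> + \<rho> + \<tau> + cnj \<tau> = 0" by (simp add: cJ_def c_def Tdef)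
  then have ht: "\<tau> + cnj \<tau> = -1 - 2*\<rho>" by algebra
  have "G (\<lambda>j. cJ j * s1 j) = G (\<lambda>_. 0)" using skew_J[OF skew1 comm1 Jent] by (simp add: JG S1G G_mult G0)
  from G_coef[OF this, of 2] have "cJ 2 * s1 2 = 0" by simp
  moreover have "s1 2 \<noteq> 0" using ss s0 by (simp add: s1_def c_def Tdef)
  ultimately have "cJ 2 = 0" by simp
  then have "1 + \<sigma> + cnj \<sigma> + \<omega> + \<omega> = 0" by (simp add: cJ_def c_def Tdef)
  then have hs: "\<sigma> + cnj \<sigma> = -1 - 2*\<omega>" by algebra

  obtain x3 y3 where xy3: "(x3,y3) \<in> R 3" using nonempty[of 3] by auto
  have "(x3,y3) \<notin> R 4" using disj[of 3 4] xy3 by auto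
  then have S3e: "S3$x3$y3 = 1" using xy3 by (simp add: S3_def)
  obtain x1 y1 where xy1: "(x1,y1) \<in> R 1" using nonempty[of 1] by auto
  have "(x1,y1) \<notin> R 2" using disj[of 1 2] xy1 by auto
  then have S1e: "S1$x1$y1 = 1" using xy1 by (simp add: S1_def)

  have "adjm (R 1) ** S3 = mat \<rho> ** S3"
    unfolding S3G G_scale A1 G_mult
    by (rule G_cong) (auto dest!: le4 simp: c_def s3_def Tdef)
  then have "\<rho> = (adjm (R 1) ** S3)$x3$y3" using S3e by simp
  moreover have "intm (adjm (R 1) ** S3)" by (simp add: S3_def intm_mult intm_diff intm_adjm)
  ultimately have "\<rho> \<in> \<int>" by (simp add: intm_def)
  then obtain ia where ia: "\<rho> = of_int ia" by (auto elim: Ints_cases)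

  have "adjm (R 3) ** S1 = mat \<omega> ** S1"
    unfolding S1G G_scale A3 G_mult
    by (rule G_cong) (auto dest!: le4 simp: c_def s1_def Tdef)
  then have "\<omega> = (adjm (R 3) ** S1)$x1$y1" using S1e by simp
  moreover have "intm (adjm (R 3) ** S1)" by (simp add: S1_def intm_mult intm_diff intm_adjm)
  ultimately have "\<omega> \<in> \<int>" by (simp add: intm_def)
  then obtain iw where iw: "\<omega> = of_int iw" by (auto elim: Ints_cases)

  have "(adjm (R 1) ** adjm (R 2)) ** S1 = mat (\<sigma> * cnj \<sigma>) ** S1"
    unfolding S1G G_scale A1 A2 G_mult
    by (rule G_cong) (auto dest!: le4 simp: c_def s1_def Tdef algebra_simps)
  then have "\<sigma> * cnj \<sigma> = ((adjm (R 1) ** adjm (R 2)) ** S1)$x1$y1" using S1e by simp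
  moreover have "intm ((adjm (R 1) ** adjm (R 2)) ** S1)" by (simp add: S1_def intm_mult intm_diff intm_adjm)
  ultimately have "\<sigma> * cnj \<sigma> \<in> \<int>" by (simp add: intm_def)
  then obtain iq where iq: "\<sigma> * cnj \<sigma> = of_int iq" by (auto elim: Ints_cases)


  define x where "x = x3"
  define f where "f j = F j $ x $ x" for j
  define K1 where "K1 = (of_real k1 :: complex)"
  define K2 where "K2 = (of_real k2 :: complex)"
  have Gd: "G d $ x $ x = d 0 * f 0 + d 1 * f 1 + d 2 * f 2 + d 3 * f 3 + d 4 * f 4" for d
    by (simp add: G_entry sum5 f_def)
  have xx: "(x,x) \<notin> R i" if "i \<le> 4" "i \<noteq> 0" for i
    using disj[OF that(1), of 0] that R0 by auto
  have k1c: "of_nat (card {y. (x,y) \<in> R 1 \<union> R 2}) = K1"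
    unfolding K1_def kv1[of x, symmetric] by simp
  have k2c: "of_nat (card {y. (x,y) \<in> R 3 \<union> R 4}) = K2"
    unfolding K2_def kv2[of x, symmetric] by simp
  have k1pos: "k1 > 0"
  proof -
    have "y1 \<in> {y. (x1,y) \<in> R 1 \<union> R 2}" using xy1 by auto
    then have "card {y. (x1,y) \<in> R 1 \<union> R 2} > 0" by (auto simp: card_gt_0_iff)
    then show ?thesis using kv1[of x1] by simp
  qed
  have k2pos: "k2 > 0"
  proof -
    have "y3 \<in> {y. (x3,y) \<in> R 3 \<union> R 4}" using xy3 by auto
    then have "card {y. (x3,y) \<in> R 3 \<union> R 4} > 0" by (auto simp: card_gt_0_iff)
    then show ?thesis using kv2[of x3] by simp
  qed
  have e12: "adjm (R 1) + adjm (R 2) = G (\<lambda>j. c 1 j + c 2 j)" by (simp only: A1 A2 G_add)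
  have e34: "adjm (R 3) + adjm (R 4) = G (\<lambda>j. c 3 j + c 4 j)" by (simp only: A3 A4 G_add)
  have "G (\<lambda>j. c 1 j + c 2 j) $ x $ x = 0" unfolding e12[symmetric] using xx[of 1] xx[of 2] by simp
  then have D1: "K1 * f 0 + 2*\<rho>*(f 1 + f 4) + (\<sigma> + cnj \<sigma>) * (f 2 + f 3) = 0"
    unfolding Gd by (simp add: c_def Tdef K1_def algebra_simps)
  have "((adjm (R 1) + adjm (R 2)) ** (adjm (R 1) + adjm (R 2)))$x$x = K1"
    using sq_plus_diag[OF t12 disj[of 1 2]] k1c by simp
  then have "G (\<lambda>j. (c 1 j + c 2 j) * (c 1 j + c 2 j)) $ x $ x = K1" by (simp only: e12 G_mult)
  then have D3: "K1^2 * f 0 + 4*\<rho>^2*(f 1 + f 4) + (\<sigma> + cnj \<sigma>)^2 * (f 2 + f 3) = K1"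
    unfolding Gd by (simp add: c_def Tdef K1_def algebra_simps power2_eq_square)
  have "((adjm (R 3) + adjm (R 4)) ** (adjm (R 3) + adjm (R 4)))$x$x = K2"
    using sq_plus_diag[OF t34 disj[of 3 4]] k2c by simp
  then have "G (\<lambda>j. (c 3 j + c 4 j) * (c 3 j + c 4 j)) $ x $ x = K2" by (simp only: e34 G_mult)
  then have D4: "K2^2 * f 0 + (\<tau> + cnj \<tau>)^2*(f 1 + f 4) + 4*\<omega>^2 * (f 2 + f 3) = K2"
    unfolding Gd by (simp add: c_def Tdef K2_def algebra_simps power2_eq_square)
  have "(S1 ** S1)$x$x = - K1"
    unfolding S1_def using sq_minus_diag[OF t12 disj[of 1 2]] k1c by simp
  then have "G (\<lambda>j. s1 j * s1 j) $ x $ x = - K1" by (simp only: S1G G_mult)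
  then have "(\<sigma> - cnj \<sigma>)^2 * (f 2 + f 3) = - K1"
    unfolding Gd by (simp add: c_def s1_def Tdef algebra_simps power2_eq_square)
  then have D5: "(of_real s)^2 * (f 2 + f 3) = K1" using ss by (simp add: power_mult_distrib)
  have "(S3 ** S3)$x$x = - K2"
    unfolding S3_def using sq_minus_diag[OF t34 disj[of 3 4]] k2c by simp
  then have "G (\<lambda>j. s3 j * s3 j) $ x $ x = - K2" by (simp only: S3G G_mult)
  then have "(\<tau> - cnj \<tau>)^2 * (f 1 + f 4) = - K2"
    unfolding Gd by (simp add: c_def s3_def Tdef algebra_simps power2_eq_square)
  then have D6: "(of_real s)^2 * (f 1 + f 4) = K2" using ts by (simp add: power_mult_distrib)
  have "G (\<lambda>_. 1) $ x $ x = 1" by (simp add: G_one mat_def)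
  then have D7: "f 0 + (f 1 + f 4) + (f 2 + f 3) = 1" unfolding Gd by (simp add: algebra_simps)
  have "G cJ $ x $ x = 1" using Jent JG by simp
  moreover have "cJ 0 = 1 + K1 + K2" by (simp add: cJ_def c_def Tdef K1_def K2_def)
  moreover have "cJ 1 = 0" "cJ 4 = 0" using ht by (simp_all add: cJ_def c_def Tdef, algebra+)
  moreover have "cJ 2 = 0" "cJ 3 = 0" using hs by (simp_all add: cJ_def c_def Tdef, algebra+)
  ultimately have D8: "(1 + K1 + K2) * f 0 = 1" unfolding Gd by simp

  have nz1: "K1 \<noteq> 0" using k1pos by (simp add: K1_def)
  have nz2: "K2 \<noteq> 0" using k2pos by (simp add: K2_def)
  have nz12: "K1 + K2 \<noteq> 0" using k1pos k2pos unfolding K1_def K2_def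
    by (metis of_real_add of_real_eq_0_iff add_pos_pos less_irrefl)
  have sq: "(of_real s)^2 = (2*\<rho>+2*\<omega>+1)^2"
    using alg[OF nz1 nz2 nz12 refl D1[unfolded hs] D3[unfolded hs] D4[unfolded ht] D5 D6 D7 D8] .
  have "4 * (\<sigma> * cnj \<sigma>) = (\<sigma> + cnj \<sigma>)^2 - (\<sigma> - cnj \<sigma>)^2" by algebra
  also have "\<dots> = (-1-2*\<omega>)^2 + (of_real s)^2" unfolding hs ss by (simp add: power_mult_distrib)
  finally have "4 * (of_int iq::complex) = (-1-2* of_int iw)^2 + (2* of_int ia+2* of_int iw+1)^2"
    unfolding sq iq ia iw .
  then have "of_int (4 * iq) = (of_int ((1+2*iw)^2 + (2*ia+2*iw+1)^2) :: complex)"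
    by (simp add: power2_eq_square algebra_simps)
  then have "(2*ia+2*iw+1)^2 + (1+2*iw)^2 = 4 * iq" by (simp only: of_int_eq_iff)
  then show False by (rule nt)
qed


lemma sum5g: "(\<Sum>j\<le>(4::nat). f j) = f 0 + f 1 + f 2 + f 3 + (f 4 :: 'b::comm_monoid_add)"
  by (simp add: numeral_eq_Suc atMost_Suc algebra_simps)

lemma card5:
  fixes l0 l1 l2 :: complex
  assumes "Im l0 = 0" "Im l1 > 0" "Im l2 > 0" "Im l1 \<noteq> Im l2"
  shows "card {l0, l1, l2, cnj l2, cnj l1} = 5"
proof -
  have "l0 \<noteq> l1" "l0 \<noteq> l2" "l0 \<noteq> cnj l2" "l0 \<noteq> cnj l1" "l1 \<noteq> l2" "l1 \<noteq> cnj l2" "l1 \<noteq> cnj l1"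
    "l2 \<noteq> cnj l2" "l2 \<noteq> cnj l1" "cnj l2 \<noteq> cnj l1"
    using assms by (auto simp: complex_eq_iff)
  then show ?thesis by simp
qed

lemma eig_set:
  fixes R :: "nat \<Rightarrow> ('a::finite \<times> 'a) set" and E :: "nat \<Rightarrow> complex^'a^'a"
  assumes "idem5 E" and "\<And>j. j \<le> 4 \<Longrightarrow> M ** E j = mat (\<mu> j) ** E j"
  shows "{c. \<exists>v. v \<noteq> 0 \<and> M *v v = c *s v} = {\<mu> 0, \<mu> 1, \<mu> 2, \<mu> 3, \<mu> 4}"
proof -
  interpret idem5 E by (rule assms(1))
  have "M = G \<mu>" by (rule repr) (use assms(2) in auto)
  then have "{c. \<exists>v. v \<noteq> 0 \<and> M *v v = c *s v} = \<mu> ` {..4}" using eig by simp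
  also have "{..4::nat} = {0,1,2,3,4}" by auto
  finally show ?thesis by simp
qed


theorem proposition4p2:
  fixes R :: "nat \<Rightarrow> ('a::finite \<times> 'a) set"
  assumes "assoc_scheme 4 R"
    and "skew_symmetric 4 R"
    and "(R 1)\<inverse> = R 2"
    and "(R 3)\<inverse> = R 4"
    and "table_type_1_or_2 R"
  shows "\<forall>i\<in>{1, 2::nat}. card (digraph_eigenvalues (R i \<union> R (i + 2))) = 5"
proof -
  define PL where "PL = (\<lambda>(\<rho>::complex) (\<sigma>::complex) (\<tau>::complex) (\<omega>::complex) (k1::real) (k2::real).
     [[1, of_real (k1/2), of_real (k1/2), of_real (k2/2), of_real (k2/2)],
      [1, \<rho>, cnj \<rho>, \<tau>, cnj \<tau>],
      [1, \<sigma>, cnj \<sigma>, \<omega>, cnj \<omega>],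
      [1, cnj \<sigma>, \<sigma>, cnj \<omega>, \<omega>],
      [1, cnj \<rho>, \<rho>, cnj \<tau>, \<tau>]])"
  obtain E \<rho> \<sigma> \<tau> \<omega> and k1 k2 r1 t1 r2 t2 :: real where
    kv1: "\<forall>x. real (card {y. (x, y) \<in> R 1 \<union> R 2}) = k1" and
    kv2: "\<forall>x. real (card {y. (x, y) \<in> R 3 \<union> R 4}) = k2" and
    prim: "prim_idempotents_table R E (\<lambda>j i. PL \<rho> \<sigma> \<tau> \<omega> k1 k2 ! j ! i)" and
    tyh: "(\<rho> = of_real (r1 / 2) \<and>
           \<sigma> = (of_real r2 + \<i> * of_real (sqrt (real CARD('a) * k1 / real (rank (E 2 + E 3))))) / 2 \<and>
           \<tau> = (of_real t1 + \<i> * of_real (sqrt (real CARD('a) * k2 / real (rank (E 1 + E 4))))) / 2 \<and>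
           \<omega> = of_real (t2 / 2))
          \<or>
          (\<rho> = (of_real r1 + \<i> * of_real (sqrt (real CARD('a) * k1 / real (rank (E 1 + E 4))))) / 2 \<and>
           \<sigma> = of_real (r2 / 2) \<and>
           \<tau> = of_real (t1 / 2) \<and>
           \<omega> = (of_real t2 + \<i> * of_real (sqrt (real CARD('a) * k2 / real (rank (E 2 + E 3))))) / 2)"
    using assms(5) unfolding table_type_1_or_2_def Let_def PL_def by blast

  define P where "P = PL \<rho> \<sigma> \<tau> \<omega> k1 k2"
  from prim have nz: "\<And>j. j\<le>4 \<Longrightarrow> E j \<noteq> 0"
    and orth: "\<And>j l. j\<le>4 \<Longrightarrow> l\<le>4 \<Longrightarrow> E j ** E l = (if j = l then E j else 0)"
    and tot: "(\<Sum>j\<le>4. E j) = mat 1"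
    and AE: "\<And>i j. i\<le>4 \<Longrightarrow> j\<le>4 \<Longrightarrow> adjm (R i) ** E j = mat (P ! j ! i) ** E j"
    unfolding prim_idempotents_table_def P_def by blast+
  have idemE: "idem5 E" by unfold_locales (use nz orth tot in auto)
  from assms(1) have nonempty: "\<And>i. i \<le> 4 \<Longrightarrow> R i \<noteq> {}"
    and disj: "\<And>i j. i\<le>4 \<Longrightarrow> j\<le>4 \<Longrightarrow> i\<noteq>j \<Longrightarrow> R i \<inter> R j = {}"
    unfolding assoc_scheme_def by auto
  have k1pos: "k1 > 0"
  proof -
    obtain x y where "(x,y) \<in> R 1" using nonempty[of 1] by auto
    then have "y \<in> {y. (x,y) \<in> R 1 \<union> R 2}" by auto
    then have "card {y. (x,y) \<in> R 1 \<union> R 2} > 0" by (auto simp: card_gt_0_iff)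
    then show ?thesis using kv1[rule_format, of x] by simp
  qed
  have k2pos: "k2 > 0"
  proof -
    obtain x y where "(x,y) \<in> R 3" using nonempty[of 3] by auto
    then have "y \<in> {y. (x,y) \<in> R 3 \<union> R 4}" by auto
    then have "card {y. (x,y) \<in> R 3 \<union> R 4} > 0" by (auto simp: card_gt_0_iff)
    then show ?thesis using kv2[rule_format, of x] by simp
  qed
  have npos: "real CARD('a) > 0" by simp
  have "(E 1 + E 4) ** E 1 = E 1" using orth[of 1 1] orth[of 4 1] by (simp add: matrix_add_rdistrib')
  then have "E 1 + E 4 \<noteq> 0" using nz[of 1] by auto
  then have m1pos: "real (rank (E 1 + E 4)) > 0" using dim_pos by simp
  have "(E 2 + E 3) ** E 2 = E 2" using orth[of 2 2] orth[of 3 2] by (simp add: matrix_add_rdistrib')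
  then have "E 2 + E 3 \<noteq> 0" using nz[of 2] by auto
  then have m2pos: "real (rank (E 2 + E 3)) > 0" using dim_pos by simp
  define y where "y = sqrt (real CARD('a) * k1 / real (rank (E 1 + E 4)))"
  define z where "z = sqrt (real CARD('a) * k2 / real (rank (E 1 + E 4)))"
  define b where "b = sqrt (real CARD('a) * k1 / real (rank (E 2 + E 3)))"
  define cc where "cc = sqrt (real CARD('a) * k2 / real (rank (E 2 + E 3)))"
  have pos: "y > 0" "z > 0" "b > 0" "cc > 0" unfolding y_def z_def b_def cc_def
    using npos k1pos k2pos m1pos m2pos by (simp_all add: divide_pos_pos)
  have kv1': "\<And>x. real (card {y. (x,y) \<in> R 1 \<union> R 2}) = k1" using kv1 by auto
  have kv2': "\<And>x. real (card {y. (x,y) \<in> R 3 \<union> R 4}) = k2" using kv2 by auto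
  have key: "Im (\<rho> + \<tau>) > 0 \<and> Im (\<sigma> + \<omega>) > 0 \<and> Im (\<rho> + \<tau>) \<noteq> Im (\<sigma> + \<omega>)"
  proof (cases "\<rho> = of_real (r1 / 2) \<and> \<sigma> = (of_real r2 + \<i> * of_real b) / 2 \<and>
           \<tau> = (of_real t1 + \<i> * of_real z) / 2 \<and> \<omega> = of_real (t2 / 2)")
    case True
    then have hh: "\<rho> = of_real (r1 / 2)" "\<sigma> = (of_real r2 + \<i> * of_real b) / 2"
           "\<tau> = (of_real t1 + \<i> * of_real z) / 2" "\<omega> = of_real (t2 / 2)" by auto
    have rr: "cnj \<rho> = \<rho>" unfolding hh(1) by simp
    have wr: "cnj \<omega> = \<omega>" unfolding hh(4) by simp
    have "z \<noteq> b"
    proof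
      assume zb: "z = b"
      show False
      proof (rule core[OF assms(1) assms(3) assms(4) idemE])
        show "\<And>i j. i \<le> 4 \<Longrightarrow> j \<le> 4 \<Longrightarrow> adjm (R i) ** E j = mat (P ! j ! i) ** E j" by (rule AE)
        show "P = [[1, of_real (k1/2), of_real (k1/2), of_real (k2/2), of_real (k2/2)],
                    [1, \<rho>, \<rho>, \<tau>, cnj \<tau>], [1, \<sigma>, cnj \<sigma>, \<omega>, \<omega>],
                    [1, cnj \<sigma>, \<sigma>, \<omega>, \<omega>], [1, \<rho>, \<rho>, cnj \<tau>, \<tau>]]"
          unfolding P_def PL_def using rr wr by simp
        show "\<And>x. real (card {y. (x,y) \<in> R 1 \<union> R 2}) = k1" by (rule kv1')
        show "\<And>x. real (card {y. (x,y) \<in> R 3 \<union> R 4}) = k2" by (rule kv2')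
        show "\<tau> - cnj \<tau> = \<i> * of_real z" using hh by (simp add: complex_eq_iff)
        show "\<sigma> - cnj \<sigma> = \<i> * of_real z" using hh zb by (simp add: complex_eq_iff)
        show "z \<noteq> 0" using pos by simp
      qed
    qed
    moreover have "Im (\<rho> + \<tau>) = z / 2" unfolding hh(1) hh(3) by simp
    moreover have "Im (\<sigma> + \<omega>) = b / 2" unfolding hh(2) hh(4) by simp
    ultimately show ?thesis using pos by simp
  next
    case False
    then have hh: "\<rho> = (of_real r1 + \<i> * of_real y) / 2" "\<sigma> = of_real (r2 / 2)"
           "\<tau> = of_real (t1 / 2)" "\<omega> = (of_real t2 + \<i> * of_real cc) / 2"
      using tyh[folded y_def z_def b_def cc_def] False by blast+
    have sr: "cnj \<sigma> = \<sigma>" unfolding hh(2) by simp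
    have tr: "cnj \<tau> = \<tau>" unfolding hh(3) by simp
    define F where "F j = E ([0,2,1,4,3] ! j)" for j
    have pm: "[0,2,1,4,3] ! j \<le> (4::nat)" if "j \<le> 4" for j using that by (auto dest!: le4)
    have idemF: "idem5 F"
    proof
      show "F j \<noteq> 0" if "j \<le> 4" for j unfolding F_def using nz pm that by blast
      show "F j ** F l = (if j = l then F j else 0)" if "j \<le> 4" "l \<le> 4" for j l
        unfolding F_def using that orth pm by (auto dest!: le4)
      show "(\<Sum>j\<le>4. F j) = mat 1" using tot unfolding F_def sum5g by (simp add: algebra_simps)
    qed
    have "y \<noteq> cc"
    proof
      assume yc: "y = cc"
      show False
      proof (rule core[OF assms(1) assms(3) assms(4) idemF])
        show "\<And>i j. i \<le> 4 \<Longrightarrow> j \<le> 4 \<Longrightarrow> adjm (R i) ** F j =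
           mat ([[1, of_real (k1/2), of_real (k1/2), of_real (k2/2), of_real (k2/2)],
                    [1, \<sigma>, \<sigma>, \<omega>, cnj \<omega>], [1, \<rho>, cnj \<rho>, \<tau>, \<tau>],
                    [1, cnj \<rho>, \<rho>, \<tau>, \<tau>], [1, \<sigma>, \<sigma>, cnj \<omega>, \<omega>]] ! j ! i) ** F j"
        proof -
          fix i j :: nat assume ij: "i \<le> 4" "j \<le> 4"
          have "adjm (R i) ** F j = mat (P ! ([0,2,1,4,3] ! j) ! i) ** F j"
            unfolding F_def using AE[OF ij(1) pm[OF ij(2)]] .
          moreover have "P ! ([0,2,1,4,3] ! j) ! i = [[1, of_real (k1/2), of_real (k1/2), of_real (k2/2), of_real (k2/2)],
                    [1, \<sigma>, \<sigma>, \<omega>, cnj \<omega>], [1, \<rho>, cnj \<rho>, \<tau>, \<tau>],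
                    [1, cnj \<rho>, \<rho>, \<tau>, \<tau>], [1, \<sigma>, \<sigma>, cnj \<omega>, \<omega>]] ! j ! i"
            using ij sr tr unfolding P_def PL_def by (auto dest!: le4)
          ultimately show "adjm (R i) ** F j =
           mat ([[1, of_real (k1/2), of_real (k1/2), of_real (k2/2), of_real (k2/2)],
                    [1, \<sigma>, \<sigma>, \<omega>, cnj \<omega>], [1, \<rho>, cnj \<rho>, \<tau>, \<tau>],
                    [1, cnj \<rho>, \<rho>, \<tau>, \<tau>], [1, \<sigma>, \<sigma>, cnj \<omega>, \<omega>]] ! j ! i) ** F j" by simp
        qed
        show "[[1, of_real (k1/2), of_real (k1/2), of_real (k2/2), of_real (k2/2)],
                    [1, \<sigma>, \<sigma>, \<omega>, cnj \<omega>], [1, \<rho>, cnj \<rho>, \<tau>, \<tau>],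
                    [1, cnj \<rho>, \<rho>, \<tau>, \<tau>], [1, \<sigma>, \<sigma>, cnj \<omega>, \<omega>]] =
              [[1, of_real (k1/2), of_real (k1/2), of_real (k2/2), of_real (k2/2)],
                    [1, \<sigma>, \<sigma>, \<omega>, cnj \<omega>], [1, \<rho>, cnj \<rho>, \<tau>, \<tau>],
                    [1, cnj \<rho>, \<rho>, \<tau>, \<tau>], [1, \<sigma>, \<sigma>, cnj \<omega>, \<omega>]]" by (rule refl)
        show "\<And>x. real (card {y. (x,y) \<in> R 1 \<union> R 2}) = k1" by (rule kv1')
        show "\<And>x. real (card {y. (x,y) \<in> R 3 \<union> R 4}) = k2" by (rule kv2')
        show "\<omega> - cnj \<omega> = \<i> * of_real cc" using hh by (simp add: complex_eq_iff)
        show "\<rho> - cnj \<rho> = \<i> * of_real cc" using hh yc by (simp add: complex_eq_iff)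
        show "cc \<noteq> 0" using pos by simp
      qed
    qed
    moreover have "Im (\<rho> + \<tau>) = y / 2" unfolding hh(1) hh(3) by simp
    moreover have "Im (\<sigma> + \<omega>) = cc / 2" unfolding hh(2) hh(4) by simp
    ultimately show ?thesis using pos by simp
  qed
  define l0 where "l0 = (of_real (k1/2) + of_real (k2/2) :: complex)"
  have l0: "Im l0 = 0" by (simp add: l0_def)
  show ?thesis
  proof
    fix i :: nat assume "i \<in> {1, 2}"
    then consider "i = 1" | "i = 2" by auto
    then show "card (digraph_eigenvalues (R i \<union> R (i + 2))) = 5"
    proof cases
      case 1
      have "adjm (R 1 \<union> R 3) = adjm (R 1) + adjm (R 3)" using disj[of 1 3] by (simp add: adjm_union)
      then have "(adjm (R 1 \<union> R 3)) ** E j = mat (P ! j ! 1 + P ! j ! 3) ** E j" if "j \<le> 4" for j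
        using AE[of 1 j] AE[of 3 j] that by (simp add: matrix_add_rdistrib' mat_add)
      from eig_set[OF idemE this]
      have eqs: "digraph_eigenvalues (R 1 \<union> R 3) = {l0, \<rho> + \<tau>, \<sigma> + \<omega>, cnj (\<sigma> + \<omega>), cnj (\<rho> + \<tau>)}"
        unfolding digraph_eigenvalues_def by (simp add: P_def PL_def l0_def)
      have c5: "card {l0, \<rho> + \<tau>, \<sigma> + \<omega>, cnj (\<sigma> + \<omega>), cnj (\<rho> + \<tau>)} = 5"
        using card5[OF l0, of "\<rho> + \<tau>" "\<sigma> + \<omega>"] key by blast
      have "R i \<union> R (i + 2) = R 1 \<union> R 3" using 1 by (simp add: eval_nat_numeral)
      then show ?thesis using eqs c5 by simp
    next
      case 2
      have "adjm (R 2 \<union> R 4) = adjm (R 2) + adjm (R 4)" using disj[of 2 4] by (simp add: adjm_union)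
      then have "(adjm (R 2 \<union> R 4)) ** E j = mat (P ! j ! 2 + P ! j ! 4) ** E j" if "j \<le> 4" for j
        using AE[of 2 j] AE[of 4 j] that by (simp add: matrix_add_rdistrib' mat_add)
      from eig_set[OF idemE this]
      have "digraph_eigenvalues (R 2 \<union> R 4) = {l0, cnj (\<rho> + \<tau>), cnj (\<sigma> + \<omega>), \<sigma> + \<omega>, \<rho> + \<tau>}"
        unfolding digraph_eigenvalues_def by (simp add: P_def PL_def l0_def)
      also have "\<dots> = {l0, \<rho> + \<tau>, \<sigma> + \<omega>, cnj (\<sigma> + \<omega>), cnj (\<rho> + \<tau>)}" by auto
      finally have eqs: "digraph_eigenvalues (R 2 \<union> R 4) = {l0, \<rho> + \<tau>, \<sigma> + \<omega>, cnj (\<sigma> + \<omega>), cnj (\<rho> + \<tau>)}" .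
      have c5: "card {l0, \<rho> + \<tau>, \<sigma> + \<omega>, cnj (\<sigma> + \<omega>), cnj (\<rho> + \<tau>)} = 5"
        using card5[OF l0, of "\<rho> + \<tau>" "\<sigma> + \<omega>"] key by blast
      have "R i \<union> R (i + 2) = R 2 \<union> R 4" using 2 by (simp add: eval_nat_numeral)
      then show ?thesis using eqs c5 by simp
    qed
  qed
qed


end
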